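(* Let $L$ be a lattice. The following are equivalent: (i) $L$ is distributive; (ii) $M_3[L]$ is a modular lattice; (iii) $M_3[L]$ is an Arguesian lattice. Moreover, if these conditions hold, then for every field $\mathbb{F}$ the lattice $M_3[L]$ can be embedded into the lattice of all subspaces of some vector space over $\mathbb{F}$.
   Context: A triple $(a,b,c)\in L^3$ is balanced if $a\wedge b=a\wedge c=b\wedge c$; $M_3[L]$ is the set of balanced triples, ordered componentwise (Schmidt's $M_3[L]$ construction). When $L$ is distributive, $M_3[L]$ is a lattice with componentwise meet and join $(a,b,c)\vee(a',b',c')=\overline{(a\vee a',b\vee b',c\vee c')}$, where $\overline{(a,b,c)}=(a\vee(b\wedge c),\,b\vee(a\wedge c),\,c\vee(a\wedge b))$. A lattice is Arguesian if it satisfies the Arguesian identity (the lattice-theoretic form of Desargues' theorem, satisfied by subspace lattices of vector spaces). *)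

theory Defs
  imports Complex_Main "HOL-Library.Function_Algebras"
begin

definition distributive_lattice :: "'a::lattice itself \<Rightarrow> bool" where
  "distributive_lattice _ \<longleftrightarrow> (\<forall>x y z::'a. inf x (sup y z) = sup (inf x y) (inf x z))"

definition balanced :: "'a::lattice \<times> 'a \<times> 'a \<Rightarrow> bool" where
  "balanced t \<longleftrightarrow> (case t of (a, b, c) \<Rightarrow> inf a b = inf a c \<and> inf a c = inf b c)"

definition M3 :: "('a::lattice \<times> 'a \<times> 'a) set" where
  "M3 = {t. balanced t}"

definition le3 :: "'a::lattice \<times> 'a \<times> 'a \<Rightarrow> 'a \<times> 'a \<times> 'a \<Rightarrow> bool" where
  "le3 s t \<longleftrightarrow> (case s of (a, b, c) \<Rightarrow> case t of (a', b', c') \<Rightarrow> a \<le> a' \<and> b \<le> b' \<and> c \<le> c')"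

definition is_lub_in :: "'b set \<Rightarrow> ('b \<Rightarrow> 'b \<Rightarrow> bool) \<Rightarrow> 'b \<Rightarrow> 'b \<Rightarrow> 'b \<Rightarrow> bool" where
  "is_lub_in S le x y z \<longleftrightarrow> z \<in> S \<and> le x z \<and> le y z \<and> (\<forall>w\<in>S. le x w \<and> le y w \<longrightarrow> le z w)"

definition is_glb_in :: "'b set \<Rightarrow> ('b \<Rightarrow> 'b \<Rightarrow> bool) \<Rightarrow> 'b \<Rightarrow> 'b \<Rightarrow> 'b \<Rightarrow> bool" where
  "is_glb_in S le x y z \<longleftrightarrow> z \<in> S \<and> le z x \<and> le z y \<and> (\<forall>w\<in>S. le w x \<and> le w y \<longrightarrow> le w z)"

definition is_lattice_on :: "'b set \<Rightarrow> ('b \<Rightarrow> 'b \<Rightarrow> bool) \<Rightarrow> bool" where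
  "is_lattice_on S le \<longleftrightarrow>
     (\<forall>x\<in>S. \<forall>y\<in>S. (\<exists>z. is_lub_in S le x y z) \<and> (\<exists>z. is_glb_in S le x y z))"

definition pjoin :: "'b set \<Rightarrow> ('b \<Rightarrow> 'b \<Rightarrow> bool) \<Rightarrow> 'b \<Rightarrow> 'b \<Rightarrow> 'b" where
  "pjoin S le x y = (THE z. is_lub_in S le x y z)"

definition pmeet :: "'b set \<Rightarrow> ('b \<Rightarrow> 'b \<Rightarrow> bool) \<Rightarrow> 'b \<Rightarrow> 'b \<Rightarrow> 'b" where
  "pmeet S le x y = (THE z. is_glb_in S le x y z)"

definition modular_lattice_on :: "'b set \<Rightarrow> ('b \<Rightarrow> 'b \<Rightarrow> bool) \<Rightarrow> bool" where
  "modular_lattice_on S le \<longleftrightarrow> is_lattice_on S le \<and>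
     (\<forall>x\<in>S. \<forall>y\<in>S. \<forall>z\<in>S. le x z \<longrightarrow>
        pjoin S le x (pmeet S le y z) = pmeet S le (pjoin S le x y) z)"

definition arguesian_lattice_on :: "'b set \<Rightarrow> ('b \<Rightarrow> 'b \<Rightarrow> bool) \<Rightarrow> bool" where
  "arguesian_lattice_on S le \<longleftrightarrow> is_lattice_on S le \<and>
     (\<forall>a0\<in>S. \<forall>a1\<in>S. \<forall>a2\<in>S. \<forall>b0\<in>S. \<forall>b1\<in>S. \<forall>b2\<in>S.
        let J = pjoin S le; M = pmeet S le;
            c0 = M (J a1 a2) (J b1 b2);
            c1 = M (J a0 a2) (J b0 b2);
            c2 = M (J a0 a1) (J b0 b1);
            c = M c2 (J c0 c1)
        in le (M (M (J a0 b0) (J a1 b1)) (J a2 b2)) (J a0 (M b0 (J c b1))))"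

definition subspace_lattice_embedding ::
  "('f::field \<Rightarrow> 'v::ab_group_add \<Rightarrow> 'v) \<Rightarrow> 'b set \<Rightarrow> ('b \<Rightarrow> 'b \<Rightarrow> bool) \<Rightarrow> ('b \<Rightarrow> 'v set) \<Rightarrow> bool" where
  "subspace_lattice_embedding scale S le \<phi> \<longleftrightarrow>
     inj_on \<phi> S \<and> (\<forall>x\<in>S. module.subspace scale (\<phi> x)) \<and>
     (\<forall>x\<in>S. \<forall>y\<in>S. \<phi> (pmeet S le x y) = \<phi> x \<inter> \<phi> y \<and>
                  \<phi> (pjoin S le x y) = module.span scale (\<phi> x \<union> \<phi> y))"

definition fscale :: "'f::field \<Rightarrow> ('i \<Rightarrow> 'f) \<Rightarrow> ('i \<Rightarrow> 'f)" where
  "fscale c v = (\<lambda>i. c * v i)"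

lemma vector_space_fscale: "vector_space (fscale :: 'f::field \<Rightarrow> ('i \<Rightarrow> 'f) \<Rightarrow> _)"
  by unfold_locales (auto simp: fscale_def fun_eq_iff algebra_simps)

end

theory Submission
  imports Defs
begin

unbundle lattice_syntax

lemma distD: "distributive_lattice TYPE('a::lattice) \<Longrightarrow> (x::'a) \<sqinter> (y \<squnion> z) = (x \<sqinter> y) \<squnion> (x \<sqinter> z)"
  unfolding distributive_lattice_def by blast

lemma dist_sup:
  assumes D: "\<And>x y z::'a::lattice. x \<sqinter> (y \<squnion> z) = (x \<sqinter> y) \<squnion> (x \<sqinter> z)"
  shows "(x::'a) \<squnion> (y \<sqinter> z) = (x \<squnion> y) \<sqinter> (x \<squnion> z)"
proof -
  have D2: "\<And>x y z::'a. (y \<squnion> z) \<sqinter> x = (y \<sqinter> x) \<squnion> (z \<sqinter> x)" using D by (metis inf_commute)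
  have "(x \<squnion> y) \<sqinter> (x \<squnion> z) = ((x \<squnion> y) \<sqinter> x) \<squnion> ((x \<squnion> y) \<sqinter> z)" by (rule D)
  also have "\<dots> = x \<squnion> ((x \<sqinter> z) \<squnion> (y \<sqinter> z))"
  proof -
    have "(x \<squnion> y) \<sqinter> x = x" by (rule inf.absorb2) simp
    moreover have "(x \<squnion> y) \<sqinter> z = (x \<sqinter> z) \<squnion> (y \<sqinter> z)" by (rule D2)
    ultimately show ?thesis by simp
  qed
  also have "\<dots> = x \<squnion> (y \<sqinter> z)" by (simp only: sup_assoc[symmetric] sup_inf_absorb)
  finally show ?thesis by simp
qed

lemma median:
  assumes D: "\<And>x y z::'a::lattice. x \<sqinter> (y \<squnion> z) = (x \<sqinter> y) \<squnion> (x \<sqinter> z)"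
  shows "((a::'a) \<squnion> (b \<sqinter> c)) \<sqinter> (b \<squnion> (a \<sqinter> c)) = (a \<sqinter> b) \<squnion> (a \<sqinter> c) \<squnion> (b \<sqinter> c)"
proof -
  have D2: "\<And>x y z::'a. (y \<squnion> z) \<sqinter> x = (y \<sqinter> x) \<squnion> (z \<sqinter> x)" using D by (metis inf_commute)
  have "(a \<squnion> (b \<sqinter> c)) \<sqinter> (b \<squnion> (a \<sqinter> c)) = ((a \<squnion> (b \<sqinter> c)) \<sqinter> b) \<squnion> ((a \<squnion> (b \<sqinter> c)) \<sqinter> (a \<sqinter> c))" by (rule D)
  also have "(a \<squnion> (b \<sqinter> c)) \<sqinter> b = (a \<sqinter> b) \<squnion> (b \<sqinter> c)"
  proof -
    have "(a \<squnion> (b \<sqinter> c)) \<sqinter> b = (a \<sqinter> b) \<squnion> ((b \<sqinter> c) \<sqinter> b)" by (rule D2)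
    moreover have "(b \<sqinter> c) \<sqinter> b = b \<sqinter> c" by (simp add: inf.absorb1)
    ultimately show ?thesis by simp
  qed
  also have "(a \<squnion> (b \<sqinter> c)) \<sqinter> (a \<sqinter> c) = a \<sqinter> c" by (simp add: inf.absorb2 le_supI1)
  finally show ?thesis by (simp only: sup_assoc sup_commute[of "b \<sqinter> c" "a \<sqinter> c"])
qed

lemma le3_simp[simp]: "le3 (a,b,c) (a',b',c') \<longleftrightarrow> a \<le> a' \<and> b \<le> b' \<and> c \<le> c'"
  by (simp add: le3_def)

lemma M3_simp[simp]: "(a,b,c) \<in> M3 \<longleftrightarrow> a \<sqinter> b = a \<sqinter> c \<and> a \<sqinter> c = b \<sqinter> c"
  by (simp add: M3_def balanced_def)

lemma le3_refl: "le3 x x" by (cases x) auto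
lemma le3_antisym: "le3 x y \<Longrightarrow> le3 y x \<Longrightarrow> x = y" by (cases x; cases y) auto
lemma le3_trans: "le3 x y \<Longrightarrow> le3 y z \<Longrightarrow> le3 x z" by (cases x; cases y; cases z) auto

lemma lub_unique: "is_lub_in S le3 x y z \<Longrightarrow> is_lub_in S le3 x y z' \<Longrightarrow> z = z'"
  unfolding is_lub_in_def by (meson le3_antisym)
lemma glb_unique: "is_glb_in S le3 x y z \<Longrightarrow> is_glb_in S le3 x y z' \<Longrightarrow> z = z'"
  unfolding is_glb_in_def by (meson le3_antisym)

lemma pjoin_eq: "is_lub_in S le3 x y z \<Longrightarrow> pjoin S le3 x y = z"
  unfolding pjoin_def by (blast intro: the_equality lub_unique)
lemma pmeet_eq: "is_glb_in S le3 x y z \<Longrightarrow> pmeet S le3 x y = z"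
  unfolding pmeet_def by (blast intro: the_equality glb_unique)

lemma glb_M3: "(a,b,c) \<in> M3 \<Longrightarrow> (a',b',c') \<in> M3 \<Longrightarrow>
   is_glb_in M3 le3 (a,b,c) (a',b',c') (a \<sqinter> a', b \<sqinter> b', c \<sqinter> c')"
  unfolding is_glb_in_def
  apply (auto simp: ac_simps)
  apply (metis inf_assoc inf_left_commute)
  apply (metis inf_assoc inf_left_commute)
  done

lemma pmeet_M3: "(a,b,c) \<in> M3 \<Longrightarrow> (a',b',c') \<in> M3 \<Longrightarrow>
   pmeet M3 le3 (a,b,c) (a',b',c') = (a \<sqinter> a', b \<sqinter> b', c \<sqinter> c')"
  by (rule pmeet_eq[OF glb_M3])

lemma pjoin_lub: "is_lattice_on S le3 \<Longrightarrow> x \<in> S \<Longrightarrow> y \<in> S \<Longrightarrow> is_lub_in S le3 x y (pjoin S le3 x y)"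
  unfolding is_lattice_on_def using pjoin_eq by metis

lemma pjoin_bounds:
  fixes a :: "'a::lattice"
  assumes "is_lattice_on (M3::('a\<times>'a\<times>'a) set) le3" "(a,b,c) \<in> M3" "(a',b',c') \<in> M3"
  obtains p q r where "pjoin M3 le3 (a,b,c) (a',b',c') = (p,q,r)" "(p,q,r) \<in> M3"
    "a \<le> p" "a' \<le> p" "b \<le> q" "b' \<le> q" "c \<le> r" "c' \<le> r"
    "\<And>p' q' r'. (p',q',r') \<in> M3 \<Longrightarrow> a \<le> p' \<Longrightarrow> a' \<le> p' \<Longrightarrow> b \<le> q' \<Longrightarrow> b' \<le> q' \<Longrightarrow> c \<le> r' \<Longrightarrow> c' \<le> r' \<Longrightarrow> p \<le> p' \<and> q \<le> q' \<and> r \<le> r'"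
proof -
  obtain p q r where e: "pjoin M3 le3 (a,b,c) (a',b',c') = (p,q,r)" by (cases "pjoin M3 le3 (a,b,c) (a',b',c')") auto
  have "is_lub_in M3 le3 (a,b,c) (a',b',c') (p,q,r)" using pjoin_lub[OF assms] e by simp
  then have L: "(p,q,r) \<in> M3" "le3 (a,b,c) (p,q,r)" "le3 (a',b',c') (p,q,r)"
    "\<And>w. w \<in> M3 \<Longrightarrow> le3 (a,b,c) w \<Longrightarrow> le3 (a',b',c') w \<Longrightarrow> le3 (p,q,r) w"
    unfolding is_lub_in_def by auto
  show ?thesis
    apply (rule that[OF e L(1)])
    using L(2,3) apply auto[6]
    using L(4) by (metis le3_simp)
qed

lemma diag_M3[simp]: "(a,a,a) \<in> M3" by simp

lemma pjoin_diag: "pjoin M3 le3 (a,a,a) (b,b,b) = (a \<squnion> b, a \<squnion> b, a \<squnion> b)"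
  by (rule pjoin_eq) (auto simp: is_lub_in_def)

lemma pjoin_below: "x \<in> M3 \<Longrightarrow> y \<in> M3 \<Longrightarrow> le3 y x \<Longrightarrow> pjoin M3 le3 x y = x"
  by (rule pjoin_eq) (auto simp: is_lub_in_def le3_refl)

lemma modL1:
  fixes x y z :: "'a::lattice"
  assumes Mod: "\<And>a b c::'a. a \<le> c \<Longrightarrow> a \<squnion> (b \<sqinter> c) = (a \<squnion> b) \<sqinter> c"
    and d: "d = (x\<sqinter>y)\<squnion>(y\<sqinter>z)\<squnion>(z\<sqinter>x)" and e: "e = (x\<squnion>y)\<sqinter>(y\<squnion>z)\<sqinter>(z\<squnion>x)"
  shows "((x \<sqinter> e) \<squnion> d) \<sqinter> ((y \<sqinter> e) \<squnion> d) = d"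
proof -
  have ye: "y \<sqinter> e = y \<sqinter> (z \<squnion> x)" unfolding e
    by (rule antisym) (auto intro: le_infI1 le_infI2 simp: le_infI le_supI1 le_supI2)
  have "(y \<sqinter> e) \<squnion> d = (z \<sqinter> x) \<squnion> (y \<sqinter> (z \<squnion> x))"
  proof -
    have a1: "x \<sqinter> y \<le> y \<sqinter> (z \<squnion> x)" by (meson inf_le1 inf_le2 le_infI le_supI2)
    have a2: "y \<sqinter> z \<le> y \<sqinter> (z \<squnion> x)" by (meson inf_le1 inf_le2 le_infI le_supI1)
    show ?thesis unfolding ye d
      by (rule antisym) (auto intro: le_supI1 le_supI2 le_infI1 le_infI2 a1 a2 simp: le_infI)
  qed
  also have "\<dots> = ((z \<sqinter> x) \<squnion> y) \<sqinter> (z \<squnion> x)" by (rule Mod) (simp add: le_supI1)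
  finally have Y: "(y \<sqinter> e) \<squnion> d = ((z \<sqinter> x) \<squnion> y) \<sqinter> (z \<squnion> x)" .
  have "x \<sqinter> ((y \<sqinter> e) \<squnion> d) = ((z \<sqinter> x) \<squnion> y) \<sqinter> x"
    unfolding Y by (rule antisym) (auto intro: le_infI1 le_infI2 simp: le_infI)
  also have "\<dots> = (z \<sqinter> x) \<squnion> (y \<sqinter> x)" by (rule Mod[symmetric]) simp
  also have "\<dots> \<le> d" unfolding d by (auto intro: le_supI1 le_supI2 simp: inf_commute)
  finally have xd: "x \<sqinter> ((y \<sqinter> e) \<squnion> d) \<le> d" .
  have dle: "d \<le> (y \<sqinter> e) \<squnion> d" by simp
  have "d \<squnion> ((x \<sqinter> e) \<sqinter> ((y \<sqinter> e) \<squnion> d)) = (d \<squnion> (x \<sqinter> e)) \<sqinter> ((y \<sqinter> e) \<squnion> d)"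
    by (rule Mod[OF dle])
  moreover have "(x \<sqinter> e) \<sqinter> ((y \<sqinter> e) \<squnion> d) \<le> d"
    using xd by (meson inf_le1 inf_mono order_trans order_refl)
  ultimately show ?thesis by (metis sup.absorb1 sup_commute)
qed

lemma modL2:
  fixes x y z :: "'a::lattice"
  assumes Mod: "\<And>a b c::'a. a \<le> c \<Longrightarrow> a \<squnion> (b \<sqinter> c) = (a \<squnion> b) \<sqinter> c"
    and e: "e = (x\<squnion>y)\<sqinter>(y\<squnion>z)\<sqinter>(z\<squnion>x)"
  shows "e \<le> (x \<sqinter> e) \<squnion> (y \<sqinter> e)"
proof -
  have xe: "x \<sqinter> e = x \<sqinter> (y \<squnion> z)" unfolding e
    by (rule antisym) (auto intro: le_infI1 le_infI2 simp: le_infI le_supI1 le_supI2)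
  have ye: "y \<sqinter> e = y \<sqinter> (z \<squnion> x)" unfolding e
    by (rule antisym) (auto intro: le_infI1 le_infI2 simp: le_infI le_supI1 le_supI2)
  have "(y \<sqinter> (z \<squnion> x)) \<squnion> (x \<sqinter> (y \<squnion> z)) = ((y \<sqinter> (z \<squnion> x)) \<squnion> x) \<sqinter> (y \<squnion> z)"
    by (rule Mod) (auto intro: le_infI1)
  moreover have "x \<squnion> (y \<sqinter> (z \<squnion> x)) = (x \<squnion> y) \<sqinter> (z \<squnion> x)" by (rule Mod) simp
  ultimately have "(y \<sqinter> e) \<squnion> (x \<sqinter> e) = (x \<squnion> y) \<sqinter> (z \<squnion> x) \<sqinter> (y \<squnion> z)"
    using xe ye by (simp add: sup_commute)
  then show ?thesis unfolding e by (simp add: sup_commute inf_aci)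
qed

lemma wmod_dist:
  assumes lat: "is_lattice_on (M3::('a::lattice\<times>'a\<times>'a) set) le3"
    and wm: "\<And>X Y Z. X\<in>(M3::('a\<times>'a\<times>'a) set) \<Longrightarrow> Y\<in>M3 \<Longrightarrow> Z\<in>M3 \<Longrightarrow> le3 X Z \<Longrightarrow>
       le3 (pmeet M3 le3 (pjoin M3 le3 X Y) Z) (pjoin M3 le3 X (pmeet M3 le3 Y Z))"
  shows "distributive_lattice TYPE('a)"
proof -
  have Mod: "\<And>a b c::'a. a \<le> c \<Longrightarrow> a \<squnion> (b \<sqinter> c) = (a \<squnion> b) \<sqinter> c"
  proof -
    fix a b c :: 'a assume ac: "a \<le> c"
    have "le3 (pmeet M3 le3 (pjoin M3 le3 (a,a,a) (b,b,b)) (c,c,c)) (pjoin M3 le3 (a,a,a) (pmeet M3 le3 (b,b,b) (c,c,c)))"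
      using wm[of "(a,a,a)" "(b,b,b)" "(c,c,c)"] ac by simp
    then have "(a \<squnion> b) \<sqinter> c \<le> a \<squnion> (b \<sqinter> c)"
      by (simp add: pjoin_diag pmeet_M3 del: M3_simp)
    moreover have "a \<squnion> (b \<sqinter> c) \<le> (a \<squnion> b) \<sqinter> c"
      using ac by (simp add: le_infI1 le_infI2 sup.coboundedI2)
    ultimately show "a \<squnion> (b \<sqinter> c) = (a \<squnion> b) \<sqinter> c" by simp
  qed
  have key: "y \<sqinter> ((x\<squnion>y)\<sqinter>(y\<squnion>z)\<sqinter>(z\<squnion>x)) \<le> (x\<sqinter>y)\<squnion>(y\<sqinter>z)\<squnion>(z\<sqinter>x)" for x y z :: 'a
  proof -
    define d where "d = (x\<sqinter>y)\<squnion>(y\<sqinter>z)\<squnion>(z\<sqinter>x)"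
    define e where "e = (x\<squnion>y)\<sqinter>(y\<squnion>z)\<sqinter>(z\<squnion>x)"
    define x1 where "x1 = (x \<sqinter> e) \<squnion> d"
    define y1 where "y1 = (y \<sqinter> e) \<squnion> d"
    define z1 where "z1 = (z \<sqinter> e) \<squnion> d"
    have xy: "x1 \<sqinter> y1 = d" unfolding x1_def y1_def by (rule modL1[OF Mod d_def e_def])
    have yx: "y1 \<sqinter> x1 = d" using xy by (simp add: inf_commute)
    have xz: "x1 \<sqinter> z1 = d" unfolding x1_def z1_def
      by (rule modL1[where x=x and y=z and z=y, OF Mod]) (simp_all add: d_def e_def inf_aci sup_aci)
    have zx: "z1 \<sqinter> x1 = d" using xz by (simp add: inf_commute)
    have zy: "z1 \<sqinter> y1 = d" unfolding y1_def z1_def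
      by (rule modL1[where x=z and y=y and z=x, OF Mod]) (simp_all add: d_def e_def inf_aci sup_aci)
    have ee: "e \<le> (x \<sqinter> e) \<squnion> (z \<sqinter> e)"
      by (rule modL2[where x=x and y=z and z=y, OF Mod]) (simp_all add: e_def inf_aci sup_aci)
    have de: "d \<le> e" unfolding d_def e_def
      by (auto intro: le_infI le_supI1 le_supI2 le_infI1 le_infI2)
    have dx1: "d \<le> x1" "d \<le> y1" "d \<le> z1" by (simp_all add: x1_def y1_def z1_def)
    have y1e: "y1 \<le> e" unfolding y1_def using de by simp
    have e13: "e \<le> x1 \<squnion> z1" using ee unfolding x1_def z1_def
      by (meson order_trans sup_ge1 sup_mono)
    have X: "(d,d,x1) \<in> M3" using dx1 by (simp add: inf.absorb1)
    have Y: "(x1,z1,d) \<in> M3" using dx1 xz by (simp add: inf.absorb2 inf.absorb1)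
    have Z: "(d,y1,x1) \<in> M3" using dx1 yx by (simp add: inf.absorb1)
    have XZ: "le3 (d,d,x1) (d,y1,x1)" using dx1 by simp
    have YZ: "pmeet M3 le3 (x1,z1,d) (d,y1,x1) = (d,d,d)"
      using pmeet_M3[OF Y Z] dx1 zy by (simp add: inf.absorb2 inf.absorb1 del: M3_simp)
    have R: "pjoin M3 le3 (d,d,x1) (d,d,d) = (d,d,x1)"
      by (rule pjoin_below[OF X]) (use dx1 in auto)
    obtain p q r where pq: "pjoin M3 le3 (d,d,x1) (x1,z1,d) = (p,q,r)" "(p,q,r) \<in> M3"
      "d \<le> p" "x1 \<le> p" "d \<le> q" "z1 \<le> q" "x1 \<le> r" "d \<le> r"
      by (rule pjoin_bounds[OF lat X Y])
    have "x1 \<le> p \<sqinter> r" using pq(4,7) by simp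
    moreover have "p \<sqinter> r = q \<sqinter> r" using pq(2) by simp
    ultimately have "x1 \<le> q \<sqinter> r" by metis
    then have "x1 \<le> q" by simp
    then have "x1 \<squnion> z1 \<le> q" using pq(6) by simp
    then have yq: "y1 \<le> q" using y1e e13 by (meson order_trans)
    have "le3 (pmeet M3 le3 (p,q,r) (d,y1,x1)) (d,d,x1)"
      using wm[OF X Y Z XZ] pq(1) YZ R by simp
    then have "q \<sqinter> y1 \<le> d" using pmeet_M3[OF pq(2) Z] by (simp del: M3_simp)
    then have "y1 \<le> d" using yq by (simp add: inf.absorb2)
    then show ?thesis unfolding y1_def d_def e_def by simp
  qed
  show ?thesis unfolding distributive_lattice_def
  proof (intro allI)
    fix x y z :: 'a
    have "x \<sqinter> ((y\<squnion>x)\<sqinter>(x\<squnion>z)\<sqinter>(z\<squnion>y)) \<le> (y\<sqinter>x)\<squnion>(x\<sqinter>z)\<squnion>(z\<sqinter>y)" by (rule key)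
    moreover have "x \<sqinter> ((y\<squnion>x)\<sqinter>(x\<squnion>z)\<sqinter>(z\<squnion>y)) = x \<sqinter> (y \<squnion> z)"
      by (rule antisym) (auto intro: le_infI1 le_infI2 simp: le_infI le_supI1 le_supI2 sup_commute)
    ultimately have "x \<sqinter> (y \<squnion> z) \<le> x \<sqinter> ((x\<sqinter>y)\<squnion>(x\<sqinter>z)\<squnion>(z\<sqinter>y))"
      by (simp add: inf_commute)
    also have "x \<sqinter> ((x\<sqinter>y)\<squnion>(x\<sqinter>z)\<squnion>(z\<sqinter>y)) = (x\<sqinter>y)\<squnion>(x\<sqinter>z)"
    proof -
      have "((x\<sqinter>y)\<squnion>(x\<sqinter>z)) \<squnion> ((z\<sqinter>y) \<sqinter> x) = (((x\<sqinter>y)\<squnion>(x\<sqinter>z)) \<squnion> (z\<sqinter>y)) \<sqinter> x"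
        by (rule Mod) simp
      moreover have "(z\<sqinter>y) \<sqinter> x \<le> (x\<sqinter>y)\<squnion>(x\<sqinter>z)"
        by (meson inf_le1 inf_le2 le_infI le_supI1 order_trans)
      ultimately show ?thesis by (metis inf_commute sup.absorb1)
    qed
    finally have "x \<sqinter> (y \<squnion> z) \<le> (x\<sqinter>y)\<squnion>(x\<sqinter>z)" .
    moreover have "(x\<sqinter>y)\<squnion>(x\<sqinter>z) \<le> x \<sqinter> (y \<squnion> z)"
      by (simp add: le_infI2 sup.coboundedI1 sup.coboundedI2)
    ultimately show "x \<sqinter> (y \<squnion> z) = (x\<sqinter>y)\<squnion>(x\<sqinter>z)" by (rule antisym)
  qed
qed

definition cl3 :: "'a::lattice \<Rightarrow> 'a \<Rightarrow> 'a \<Rightarrow> 'a \<times> 'a \<times> 'a" where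
  "cl3 p q r = (p \<squnion> (q \<sqinter> r), q \<squnion> (p \<sqinter> r), r \<squnion> (p \<sqinter> q))"

lemma cl3_M3:
  assumes D: "\<And>x y z::'a::lattice. x \<sqinter> (y \<squnion> z) = (x \<sqinter> y) \<squnion> (x \<sqinter> z)"
  shows "cl3 (p::'a) q r \<in> M3"
proof -
  define m where "m = (p \<sqinter> q) \<squnion> (p \<sqinter> r) \<squnion> (q \<sqinter> r)"
  have 1: "(p \<squnion> (q \<sqinter> r)) \<sqinter> (q \<squnion> (p \<sqinter> r)) = m" unfolding m_def by (rule median[OF D])
  have 2: "(p \<squnion> (r \<sqinter> q)) \<sqinter> (r \<squnion> (p \<sqinter> q)) = (p \<sqinter> r) \<squnion> (p \<sqinter> q) \<squnion> (r \<sqinter> q)" by (rule median[OF D])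
  have 3: "(q \<squnion> (r \<sqinter> p)) \<sqinter> (r \<squnion> (q \<sqinter> p)) = (q \<sqinter> r) \<squnion> (q \<sqinter> p) \<squnion> (r \<sqinter> p)" by (rule median[OF D])
  have m2: "(p \<sqinter> r) \<squnion> (p \<sqinter> q) \<squnion> (r \<sqinter> q) = m" unfolding m_def by (simp add: sup_aci inf_commute)
  have m3: "(q \<sqinter> r) \<squnion> (q \<sqinter> p) \<squnion> (r \<sqinter> p) = m" unfolding m_def by (simp add: sup_aci inf_commute)
  have h2: "(p \<squnion> (q \<sqinter> r)) \<sqinter> (r \<squnion> (p \<sqinter> q)) = m" using 2 m2 by (simp only: inf_commute[of r q])
  have h3: "(q \<squnion> (p \<sqinter> r)) \<sqinter> (r \<squnion> (p \<sqinter> q)) = m" using 3 m3 by (simp only: inf_commute[of r p] inf_commute[of q p])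
  show ?thesis unfolding cl3_def M3_simp using 1 h2 h3 by simp
qed

lemma lub_M3:
  assumes D: "\<And>x y z::'a::lattice. x \<sqinter> (y \<squnion> z) = (x \<sqinter> y) \<squnion> (x \<sqinter> z)"
  shows "is_lub_in M3 le3 ((a::'a),b,c) (a',b',c') (cl3 (a \<squnion> a') (b \<squnion> b') (c \<squnion> c'))"
  unfolding is_lub_in_def
proof (intro conjI ballI impI)
  show "cl3 (a \<squnion> a') (b \<squnion> b') (c \<squnion> c') \<in> M3" by (rule cl3_M3[OF D])
  show "le3 (a, b, c) (cl3 (a \<squnion> a') (b \<squnion> b') (c \<squnion> c'))" by (simp add: cl3_def le_supI1)
  show "le3 (a', b', c') (cl3 (a \<squnion> a') (b \<squnion> b') (c \<squnion> c'))" by (simp add: cl3_def le_supI1)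
  fix w assume w: "w \<in> M3" and "le3 (a, b, c) w \<and> le3 (a', b', c') w"
  then obtain p q r where wp: "w = (p,q,r)" "a \<squnion> a' \<le> p" "b \<squnion> b' \<le> q" "c \<squnion> c' \<le> r"
    by (cases w) auto
  have bal: "p \<sqinter> q = p \<sqinter> r" "p \<sqinter> r = q \<sqinter> r" using w wp(1) by auto
  have i1: "(b \<squnion> b') \<sqinter> (c \<squnion> c') \<le> q \<sqinter> r" using wp by (meson inf_mono)
  have i2: "(a \<squnion> a') \<sqinter> (c \<squnion> c') \<le> p \<sqinter> r" using wp by (meson inf_mono)
  have i3: "(a \<squnion> a') \<sqinter> (b \<squnion> b') \<le> p \<sqinter> q" using wp by (meson inf_mono)
  have "q \<sqinter> r \<le> p" using bal by (metis inf_le1)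
  then have 1: "(a \<squnion> a') \<squnion> (b \<squnion> b') \<sqinter> (c \<squnion> c') \<le> p" using i1 wp(2) by (meson order_trans sup_least)
  have "p \<sqinter> r \<le> q" using bal by (metis inf_le1)
  then have 2: "(b \<squnion> b') \<squnion> (a \<squnion> a') \<sqinter> (c \<squnion> c') \<le> q" using i2 wp(3) by (meson order_trans sup_least)
  have "p \<sqinter> q \<le> r" using bal by (metis inf_le2)
  then have 3: "(c \<squnion> c') \<squnion> (a \<squnion> a') \<sqinter> (b \<squnion> b') \<le> r" using i3 wp(4) by (meson order_trans sup_least)
  show "le3 (cl3 (a \<squnion> a') (b \<squnion> b') (c \<squnion> c')) w"
    using 1 2 3 unfolding cl3_def wp(1) le3_simp by blast
qed

lemma lattice_M3:
  assumes D: "\<And>x y z::'a::lattice. x \<sqinter> (y \<squnion> z) = (x \<sqinter> y) \<squnion> (x \<sqinter> z)"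
  shows "is_lattice_on (M3::('a\<times>'a\<times>'a) set) le3"
  unfolding is_lattice_on_def
proof (intro ballI conjI)
  fix x y :: "'a\<times>'a\<times>'a" assume "x \<in> M3" "y \<in> M3"
  then show "\<exists>z. is_lub_in M3 le3 x y z" using lub_M3[OF D] by (cases x; cases y) blast
  show "\<exists>z. is_glb_in M3 le3 x y z" using glb_M3 \<open>x\<in>M3\<close> \<open>y\<in>M3\<close> by (cases x; cases y) blast
qed

lemma pjoin_M3:
  assumes D: "\<And>x y z::'a::lattice. x \<sqinter> (y \<squnion> z) = (x \<sqinter> y) \<squnion> (x \<sqinter> z)"
  shows "pjoin M3 le3 ((a::'a),b,c) (a',b',c') = cl3 (a \<squnion> a') (b \<squnion> b') (c \<squnion> c')"
  by (rule pjoin_eq[OF lub_M3[OF D]])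

definition pf :: "'a::lattice set \<Rightarrow> bool" where
  "pf P \<longleftrightarrow> (\<forall>x y. x \<sqinter> y \<in> P \<longleftrightarrow> x \<in> P \<and> y \<in> P) \<and> (\<forall>x y. x \<squnion> y \<in> P \<longleftrightarrow> x \<in> P \<or> y \<in> P)"

definition filt :: "'a::lattice set \<Rightarrow> bool" where
  "filt F \<longleftrightarrow> (\<forall>x y. x \<in> F \<longrightarrow> x \<le> y \<longrightarrow> y \<in> F) \<and> (\<forall>x\<in>F. \<forall>y\<in>F. x \<sqinter> y \<in> F)"

lemma sep:
  assumes D: "\<And>x y z::'a::lattice. x \<sqinter> (y \<squnion> z) = (x \<sqinter> y) \<squnion> (x \<sqinter> z)"
    and ab: "\<not> (a::'a) \<le> b"
  shows "\<exists>P. pf P \<and> a \<in> P \<and> b \<notin> P"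
proof -
  define A where "A = {F. filt F \<and> a \<in> F \<and> b \<notin> F}"
  have "\<forall>C\<in>chains A. \<exists>U\<in>A. \<forall>X\<in>C. X \<subseteq> U"
  proof
    fix C assume C: "C \<in> chains A"
    show "\<exists>U\<in>A. \<forall>X\<in>C. X \<subseteq> U"
    proof (cases "C = {}")
      case True
      have "{x. a \<le> x} \<in> A" unfolding A_def filt_def using ab by auto
      then show ?thesis using True by blast
    next
      case False
      have CA: "C \<subseteq> A" and ch: "\<And>X Y. X \<in> C \<Longrightarrow> Y \<in> C \<Longrightarrow> X \<subseteq> Y \<or> Y \<subseteq> X"
        using C unfolding chains_def chain_subset_def by auto
      have "\<Union>C \<in> A"
        unfolding A_def
      proof (intro CollectI conjI)
        show "a \<in> \<Union>C" using False CA unfolding A_def by auto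
        show "b \<notin> \<Union>C" using CA unfolding A_def by auto
        show "filt (\<Union>C)" unfolding filt_def
        proof (intro conjI allI impI ballI)
          fix x y assume "x \<in> \<Union>C" "x \<le> y"
          then show "y \<in> \<Union>C" using CA unfolding A_def filt_def by blast
        next
          fix x y assume "x \<in> \<Union>C" "y \<in> \<Union>C"
          then obtain X Y where "X \<in> C" "Y \<in> C" "x \<in> X" "y \<in> Y" by blast
          moreover have "filt X" "filt Y" using CA \<open>X \<in> C\<close> \<open>Y \<in> C\<close> unfolding A_def by auto
          ultimately show "x \<sqinter> y \<in> \<Union>C" using ch[of X Y] unfolding filt_def by blast
        qed
      qed
      then show ?thesis by blast
    qed
  qed
  from Zorn_Lemma2[OF this] obtain M where MA: "M \<in> A" and Mmax0: "\<forall>X\<in>A. M \<subseteq> X \<longrightarrow> X = M"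
    by (elim bexE) simp
  have Mmax: "\<And>X. X \<in> A \<Longrightarrow> M \<subseteq> X \<Longrightarrow> X = M" using Mmax0 by simp
  have fM: "filt M" and aM: "a \<in> M" and bM: "b \<notin> M" using MA unfolding A_def by auto
  have up: "\<And>x y. x \<in> M \<Longrightarrow> x \<le> y \<Longrightarrow> y \<in> M" and mc: "\<And>x y. x \<in> M \<Longrightarrow> y \<in> M \<Longrightarrow> x \<sqinter> y \<in> M"
    using fM unfolding filt_def by auto
  have ext: "\<exists>f\<in>M. f \<sqinter> t \<le> b" if t: "t \<notin> M" for t
  proof (rule ccontr)
    assume nb: "\<not> (\<exists>f\<in>M. f \<sqinter> t \<le> b)"
    define G where "G = {z. \<exists>f\<in>M. f \<sqinter> t \<le> z}"
    have "G \<in> A" unfolding A_def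
    proof (intro CollectI conjI)
      show "filt G" unfolding filt_def G_def
      proof (intro conjI allI impI ballI)
        fix x y assume "x \<in> {z. \<exists>f\<in>M. f \<sqinter> t \<le> z}" "x \<le> y"
        then show "y \<in> {z. \<exists>f\<in>M. f \<sqinter> t \<le> z}" by (auto intro: order_trans)
      next
        fix x y assume "x \<in> {z. \<exists>f\<in>M. f \<sqinter> t \<le> z}" "y \<in> {z. \<exists>f\<in>M. f \<sqinter> t \<le> z}"
        then obtain f g where fg: "f \<in> M" "g \<in> M" "f \<sqinter> t \<le> x" "g \<sqinter> t \<le> y" by auto
        have h1: "(f \<sqinter> g) \<sqinter> t \<le> f \<sqinter> t" by (rule inf_mono) simp_all
        have h2: "(f \<sqinter> g) \<sqinter> t \<le> g \<sqinter> t" by (rule inf_mono) simp_all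
        have "(f \<sqinter> g) \<sqinter> t \<le> x" using h1 fg(3) by (rule order_trans)
        moreover have "(f \<sqinter> g) \<sqinter> t \<le> y" using h2 fg(4) by (rule order_trans)
        ultimately have "(f \<sqinter> g) \<sqinter> t \<le> x \<sqinter> y" "f \<sqinter> g \<in> M" using mc fg by simp_all
        then show "x \<sqinter> y \<in> {z. \<exists>f\<in>M. f \<sqinter> t \<le> z}" by blast
      qed
      show "a \<in> G" unfolding G_def using aM inf_le1[of a t] by blast
      show "b \<notin> G" unfolding G_def using nb by auto
    qed
    moreover have "M \<subseteq> G" unfolding G_def using inf_le1[of _ t] by blast
    ultimately have "G = M" by (rule Mmax)
    moreover have "t \<in> G" unfolding G_def using aM inf_le2[of a t] by blast
    ultimately show False using t by simp
  qed
  have "pf M" unfolding pf_def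
  proof (intro conjI allI)
    fix x y
    show "x \<sqinter> y \<in> M \<longleftrightarrow> x \<in> M \<and> y \<in> M"
    proof
      assume "x \<sqinter> y \<in> M" then show "x \<in> M \<and> y \<in> M" using up[of "x \<sqinter> y" x] up[of "x \<sqinter> y" y] by simp
    next
      assume "x \<in> M \<and> y \<in> M" then show "x \<sqinter> y \<in> M" using mc by blast
    qed
    show "x \<squnion> y \<in> M \<longleftrightarrow> x \<in> M \<or> y \<in> M"
    proof
      assume xy: "x \<squnion> y \<in> M"
      show "x \<in> M \<or> y \<in> M"
      proof (rule ccontr)
        assume "\<not> (x \<in> M \<or> y \<in> M)"
        then obtain f g where f: "f \<in> M" "f \<sqinter> x \<le> b" and g: "g \<in> M" "g \<sqinter> y \<le> b"
          using ext by blast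
        define h where "h = (f \<sqinter> g) \<sqinter> (x \<squnion> y)"
        have hM: "h \<in> M" unfolding h_def using f g xy mc by blast
        have hxy: "h \<le> x \<squnion> y" "h \<le> f" "h \<le> g" unfolding h_def
          by (auto intro: le_infI1 le_infI2)
        have "h = h \<sqinter> (x \<squnion> y)" using hxy(1) by (simp add: inf.absorb1)
        also have "\<dots> = (h \<sqinter> x) \<squnion> (h \<sqinter> y)" by (rule D)
        finally have "h = (h \<sqinter> x) \<squnion> (h \<sqinter> y)" .
        moreover have "h \<sqinter> x \<le> b"
        proof -
          have "h \<sqinter> x \<le> f \<sqinter> x" using hxy(2) by (rule inf_mono) simp
          then show ?thesis using f(2) by (rule order_trans)
        qed
        moreover have "h \<sqinter> y \<le> b"
        proof -
          have "h \<sqinter> y \<le> g \<sqinter> y" using hxy(3) by (rule inf_mono) simp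
          then show ?thesis using g(2) by (rule order_trans)
        qed
        ultimately have "h \<le> b" by (metis sup_least)
        then show False using hM up bM by blast
      qed
    next
      assume "x \<in> M \<or> y \<in> M"
      then show "x \<squnion> y \<in> M" using up by (meson sup_ge1 sup_ge2)
    qed
  qed
  then show ?thesis using aM bM by blast
qed

lemma module_fscale: "module (fscale :: 'f::field \<Rightarrow> ('i \<Rightarrow> 'f) \<Rightarrow> _)"
  by unfold_locales (auto simp: fscale_def fun_eq_iff algebra_simps)

definition bal3 :: "bool \<Rightarrow> bool \<Rightarrow> bool \<Rightarrow> bool" where
  "bal3 \<alpha> \<beta> \<gamma> \<longleftrightarrow> (\<alpha> \<and> \<beta> \<longleftrightarrow> \<alpha> \<and> \<gamma>) \<and> (\<alpha> \<and> \<gamma> \<longleftrightarrow> \<beta> \<and> \<gamma>)"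

definition Wb :: "bool \<Rightarrow> bool \<Rightarrow> bool \<Rightarrow> ('f::field \<times> 'f) set" where
  "Wb \<alpha> \<beta> \<gamma> = {(x,y). (\<alpha>\<and>\<beta>) \<or> (\<alpha>\<and>\<gamma>) \<or> (\<beta>\<and>\<gamma>) \<or> (\<alpha> \<and> y = 0) \<or> (\<beta> \<and> x = 0) \<or> (\<gamma> \<and> x = y) \<or> (x = 0 \<and> y = 0)}"

lemma Wb_0[simp]: "(0,0) \<in> Wb \<alpha> \<beta> \<gamma>" by (simp add: Wb_def)

lemma Wb_add: "(x,y) \<in> Wb \<alpha> \<beta> \<gamma> \<Longrightarrow> (x',y') \<in> Wb \<alpha> \<beta> \<gamma> \<Longrightarrow> (x+x',y+y') \<in> Wb \<alpha> \<beta> \<gamma>"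
  by (auto simp: Wb_def)

lemma Wb_scale: "(x,y) \<in> Wb \<alpha> \<beta> \<gamma> \<Longrightarrow> (c*x,c*y) \<in> Wb \<alpha> \<beta> \<gamma>"
  by (auto simp: Wb_def)

lemma Wb_mono: "(x,y) \<in> Wb \<alpha> \<beta> \<gamma> \<Longrightarrow> \<alpha> \<longrightarrow> \<alpha>' \<Longrightarrow> \<beta> \<longrightarrow> \<beta>' \<Longrightarrow> \<gamma> \<longrightarrow> \<gamma>' \<Longrightarrow> (x,y) \<in> Wb \<alpha>' \<beta>' \<gamma>'"
  by (auto simp: Wb_def)

lemma Wb_meet: "bal3 \<alpha> \<beta> \<gamma> \<Longrightarrow> bal3 \<alpha>' \<beta>' \<gamma>' \<Longrightarrow>
   (x,y) \<in> Wb (\<alpha> \<and> \<alpha>') (\<beta> \<and> \<beta>') (\<gamma> \<and> \<gamma>') \<longleftrightarrow> (x,y) \<in> Wb \<alpha> \<beta> \<gamma> \<and> (x,y) \<in> Wb \<alpha>' \<beta>' \<gamma>'"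
  by (cases \<alpha>; cases \<beta>; cases \<gamma>; cases \<alpha>'; cases \<beta>'; cases \<gamma>') (auto simp: Wb_def bal3_def)

lemma Wb_dec:
  fixes x y :: "'f::field"
  assumes "bal3 \<alpha> \<beta> \<gamma>" "bal3 \<alpha>' \<beta>' \<gamma>'"
    and "(x,y) \<in> Wb ((\<alpha>\<or>\<alpha>') \<or> ((\<beta>\<or>\<beta>') \<and> (\<gamma>\<or>\<gamma>'))) ((\<beta>\<or>\<beta>') \<or> ((\<alpha>\<or>\<alpha>') \<and> (\<gamma>\<or>\<gamma>'))) ((\<gamma>\<or>\<gamma>') \<or> ((\<alpha>\<or>\<alpha>') \<and> (\<beta>\<or>\<beta>')))"
  shows "\<exists>x1 y1 x2 y2. (x1,y1) \<in> Wb \<alpha> \<beta> \<gamma> \<and> (x2,y2) \<in> Wb \<alpha>' \<beta>' \<gamma>' \<and> x = x1 + x2 \<and> y = y1 + y2"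
proof -
  have "((x,y) \<in> Wb \<alpha> \<beta> \<gamma> \<and> (0,0) \<in> Wb \<alpha>' \<beta>' \<gamma>') \<or> ((0,0) \<in> Wb \<alpha> \<beta> \<gamma> \<and> (x,y) \<in> Wb \<alpha>' \<beta>' \<gamma>')
    \<or> ((x,0) \<in> Wb \<alpha> \<beta> \<gamma> \<and> (0,y) \<in> Wb \<alpha>' \<beta>' \<gamma>') \<or> ((0,y) \<in> Wb \<alpha> \<beta> \<gamma> \<and> (x,0) \<in> Wb \<alpha>' \<beta>' \<gamma>')
    \<or> ((x-y,0) \<in> Wb \<alpha> \<beta> \<gamma> \<and> (y,y) \<in> Wb \<alpha>' \<beta>' \<gamma>') \<or> ((y,y) \<in> Wb \<alpha> \<beta> \<gamma> \<and> (x-y,0) \<in> Wb \<alpha>' \<beta>' \<gamma>')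
    \<or> ((0,y-x) \<in> Wb \<alpha> \<beta> \<gamma> \<and> (x,x) \<in> Wb \<alpha>' \<beta>' \<gamma>') \<or> ((x,x) \<in> Wb \<alpha> \<beta> \<gamma> \<and> (0,y-x) \<in> Wb \<alpha>' \<beta>' \<gamma>')"
    using assms
    by (cases \<alpha>; cases \<beta>; cases \<gamma>; cases \<alpha>'; cases \<beta>'; cases \<gamma>') (simp_all add: Wb_def bal3_def)
  then show ?thesis by (elim disjE) force+
qed

lemma Wb_det:
  assumes "bal3 \<alpha> \<beta> \<gamma>"
  shows "((1::'f::field),0) \<in> Wb \<alpha> \<beta> \<gamma> \<longleftrightarrow> \<alpha>" "((0::'f),1) \<in> Wb \<alpha> \<beta> \<gamma> \<longleftrightarrow> \<beta>" "((1::'f),1) \<in> Wb \<alpha> \<beta> \<gamma> \<longleftrightarrow> \<gamma>"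
  using assms by (auto simp: Wb_def bal3_def)

lemma pf_inf[simp]: "pf P \<Longrightarrow> x \<sqinter> y \<in> P \<longleftrightarrow> x \<in> P \<and> y \<in> P" by (simp add: pf_def)
lemma pf_sup[simp]: "pf P \<Longrightarrow> x \<squnion> y \<in> P \<longleftrightarrow> x \<in> P \<or> y \<in> P" by (simp add: pf_def)

lemma pf_bal: "pf P \<Longrightarrow> (a,b,c) \<in> M3 \<Longrightarrow> bal3 (a \<in> P) (b \<in> P) (c \<in> P)"
  unfolding bal3_def by (metis M3_simp pf_inf)

definition emb :: "('a::lattice \<times> 'a \<times> 'a) \<Rightarrow> ('a set \<times> bool \<Rightarrow> 'f::field) set" where
  "emb t = {v. \<forall>P. case t of (a,b,c) \<Rightarrow> (pf P \<longrightarrow> (v (P,True), v (P,False)) \<in> Wb (a\<in>P) (b\<in>P) (c\<in>P))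
                 \<and> (\<not> pf P \<longrightarrow> v (P,True) = 0 \<and> v (P,False) = 0)}"

lemma emb_mem: "v \<in> emb (a,b,c) \<longleftrightarrow> (\<forall>P. (pf P \<longrightarrow> (v (P,True), v (P,False)) \<in> Wb (a\<in>P) (b\<in>P) (c\<in>P))
                 \<and> (\<not> pf P \<longrightarrow> v (P,True) = 0 \<and> v (P,False) = 0))"
  by (simp add: emb_def)

lemma emb_subspace: "module.subspace fscale (emb t)"
proof -
  obtain a b c where t: "t = (a,b,c)" by (cases t) auto
  show ?thesis unfolding t module.subspace_def[OF module_fscale]
    by (simp add: emb_mem fscale_def Wb_add Wb_scale)
qed

lemma emb_meet:
  assumes "(a,b,c) \<in> M3" "(a',b',c') \<in> M3"
  shows "emb (a \<sqinter> a', b \<sqinter> b', c \<sqinter> c') = emb (a,b,c) \<inter> emb (a',b',c')"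
  using pf_bal[OF _ assms(1)] pf_bal[OF _ assms(2)]
  by (auto simp: emb_mem Wb_meet)

lemma emb_join:
  assumes "(a::'a::lattice,b,c) \<in> M3" "(a',b',c') \<in> M3"
  shows "(emb (cl3 (a \<squnion> a') (b \<squnion> b') (c \<squnion> c')) :: ('a set \<times> bool \<Rightarrow> 'f::field) set)
     = {u + w | u w. u \<in> emb (a,b,c) \<and> w \<in> emb (a',b',c')}"
proof (intro set_eqI iffI)
  fix v :: "'a set \<times> bool \<Rightarrow> 'f"
  assume v: "v \<in> emb (cl3 (a \<squnion> a') (b \<squnion> b') (c \<squnion> c'))"
  have "\<forall>P. \<exists>x1 y1 x2 y2. (pf P \<longrightarrow> (x1,y1) \<in> Wb (a\<in>P) (b\<in>P) (c\<in>P) \<and> (x2,y2) \<in> Wb (a'\<in>P) (b'\<in>P) (c'\<in>P))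
     \<and> (\<not> pf P \<longrightarrow> x1 = 0 \<and> y1 = 0 \<and> x2 = 0 \<and> y2 = 0) \<and> v (P,True) = x1 + x2 \<and> v (P,False) = y1 + y2"
  proof
    fix P
    show "\<exists>x1 y1 x2 y2. (pf P \<longrightarrow> (x1,y1) \<in> Wb (a\<in>P) (b\<in>P) (c\<in>P) \<and> (x2,y2) \<in> Wb (a'\<in>P) (b'\<in>P) (c'\<in>P))
     \<and> (\<not> pf P \<longrightarrow> x1 = 0 \<and> y1 = 0 \<and> x2 = 0 \<and> y2 = 0) \<and> v (P,True) = x1 + x2 \<and> v (P,False) = y1 + y2"
    proof (cases "pf P")
      case True
      have "(v (P,True), v (P,False)) \<in> Wb ((a\<in>P \<or> a'\<in>P) \<or> ((b\<in>P \<or> b'\<in>P) \<and> (c\<in>P \<or> c'\<in>P)))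
         ((b\<in>P \<or> b'\<in>P) \<or> ((a\<in>P \<or> a'\<in>P) \<and> (c\<in>P \<or> c'\<in>P))) ((c\<in>P \<or> c'\<in>P) \<or> ((a\<in>P \<or> a'\<in>P) \<and> (b\<in>P \<or> b'\<in>P)))"
        using v True by (simp add: emb_mem cl3_def)
      from Wb_dec[OF pf_bal[OF True assms(1)] pf_bal[OF True assms(2)] this] True show ?thesis by blast
    next
      case False
      then show ?thesis using v by (simp add: emb_mem cl3_def)
    qed
  qed
  then obtain x1 y1 x2 y2 where X: "\<And>P. (pf P \<longrightarrow> (x1 P,y1 P) \<in> Wb (a\<in>P) (b\<in>P) (c\<in>P) \<and> (x2 P,y2 P) \<in> Wb (a'\<in>P) (b'\<in>P) (c'\<in>P))
     \<and> (\<not> pf P \<longrightarrow> x1 P = 0 \<and> y1 P = 0 \<and> x2 P = 0 \<and> y2 P = 0) \<and> v (P,True) = x1 P + x2 P \<and> v (P,False) = y1 P + y2 P"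
    by metis
  define u where "u = (\<lambda>(P,bb). if bb then x1 P else y1 P)"
  define w where "w = (\<lambda>(P,bb). if bb then x2 P else y2 P)"
  have "v = u + w"
  proof
    fix i show "v i = (u + w) i" using X[of "fst i"] by (cases i) (auto simp: u_def w_def)
  qed
  moreover have "u \<in> emb (a,b,c)" using X by (simp add: emb_mem u_def)
  moreover have "w \<in> emb (a',b',c')" using X by (simp add: emb_mem w_def)
  ultimately show "v \<in> {u + w | u w. u \<in> emb (a,b,c) \<and> w \<in> emb (a',b',c')}" by blast
next
  fix v :: "'a set \<times> bool \<Rightarrow> 'f"
  assume "v \<in> {u + w | u w. u \<in> emb (a,b,c) \<and> w \<in> emb (a',b',c')}"
  then obtain u w where v: "v = u + w" and u: "u \<in> emb (a,b,c)" and w: "w \<in> emb (a',b',c')" by blast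
  show "v \<in> emb (cl3 (a \<squnion> a') (b \<squnion> b') (c \<squnion> c'))"
    unfolding cl3_def emb_mem
  proof (intro allI conjI impI)
    fix P :: "'a set" assume P: "pf P"
    have "(u (P,True), u (P,False)) \<in> Wb (a\<in>P) (b\<in>P) (c\<in>P)" using u P by (simp add: emb_mem)
    then have 1: "(u (P,True), u (P,False)) \<in> Wb (a \<squnion> a' \<squnion> (b \<squnion> b') \<sqinter> (c \<squnion> c') \<in> P) (b \<squnion> b' \<squnion> (a \<squnion> a') \<sqinter> (c \<squnion> c') \<in> P) (c \<squnion> c' \<squnion> (a \<squnion> a') \<sqinter> (b \<squnion> b') \<in> P)"
      by (rule Wb_mono) (simp_all add: P)
    have "(w (P,True), w (P,False)) \<in> Wb (a'\<in>P) (b'\<in>P) (c'\<in>P)" using w P by (simp add: emb_mem)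
    then have 2: "(w (P,True), w (P,False)) \<in> Wb (a \<squnion> a' \<squnion> (b \<squnion> b') \<sqinter> (c \<squnion> c') \<in> P) (b \<squnion> b' \<squnion> (a \<squnion> a') \<sqinter> (c \<squnion> c') \<in> P) (c \<squnion> c' \<squnion> (a \<squnion> a') \<sqinter> (b \<squnion> b') \<in> P)"
      by (rule Wb_mono) (simp_all add: P)
    show "(v (P, True), v (P, False)) \<in> Wb (a \<squnion> a' \<squnion> (b \<squnion> b') \<sqinter> (c \<squnion> c') \<in> P) (b \<squnion> b' \<squnion> (a \<squnion> a') \<sqinter> (c \<squnion> c') \<in> P) (c \<squnion> c' \<squnion> (a \<squnion> a') \<sqinter> (b \<squnion> b') \<in> P)"
      using Wb_add[OF 1 2] v by simp
  next
    fix P :: "'a set" assume "\<not> pf P"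
    then show "v (P, True) = 0" "v (P, False) = 0" using u w v by (simp_all add: emb_mem)
  qed
qed

lemma emb_point:
  assumes P: "pf P"
  shows "(\<lambda>(Q,bb). if Q = P then (if bb then x else y) else 0) \<in> emb (a,b,c) \<longleftrightarrow> (x,y) \<in> Wb (a\<in>P) (b\<in>P) (c\<in>P)"
  using P by (auto simp: emb_mem)

lemma emb_inj:
  assumes D: "\<And>x y z::'a::lattice. x \<sqinter> (y \<squnion> z) = (x \<sqinter> y) \<squnion> (x \<sqinter> z)"
  shows "inj_on (emb :: _ \<Rightarrow> ('a set \<times> bool \<Rightarrow> 'f::field) set) M3"
proof
  fix s t :: "'a \<times> 'a \<times> 'a" assume s: "s \<in> M3" and t: "t \<in> M3"
    and eq: "(emb s :: ('a set \<times> bool \<Rightarrow> 'f) set) = emb t"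
  obtain a b c where sa: "s = (a,b,c)" by (cases s) auto
  obtain a' b' c' where ta: "t = (a',b',c')" by (cases t) auto
  have W: "(x,y) \<in> Wb (a\<in>P) (b\<in>P) (c\<in>P) \<longleftrightarrow> (x,y) \<in> Wb (a'\<in>P) (b'\<in>P) (c'\<in>P)" if P: "pf P" for P and x y :: 'f
    using eq emb_point[OF P, of x y a b c] emb_point[OF P, of x y a' b' c'] sa ta by simp
  have same: "\<And>P. pf P \<Longrightarrow> (a\<in>P \<longleftrightarrow> a'\<in>P) \<and> (b\<in>P \<longleftrightarrow> b'\<in>P) \<and> (c\<in>P \<longleftrightarrow> c'\<in>P)"
  proof -
    fix P :: "'a set" assume P: "pf P"
    have b1: "bal3 (a\<in>P) (b\<in>P) (c\<in>P)" using pf_bal[OF P] s sa by simp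
    have b2: "bal3 (a'\<in>P) (b'\<in>P) (c'\<in>P)" using pf_bal[OF P] t ta by simp
    show "(a\<in>P \<longleftrightarrow> a'\<in>P) \<and> (b\<in>P \<longleftrightarrow> b'\<in>P) \<and> (c\<in>P \<longleftrightarrow> c'\<in>P)"
      using W[OF P, of 1 0] W[OF P, of 0 1] W[OF P, of 1 1] Wb_det[OF b1, where 'f='f] Wb_det[OF b2, where 'f='f] by simp
  qed
  have eqel: "u = u'" if "\<And>P. pf P \<Longrightarrow> (u \<in> P \<longleftrightarrow> u' \<in> P)" for u u' :: 'a
  proof (rule antisym)
    show "u \<le> u'" using sep[OF D, of u u'] that by blast
    show "u' \<le> u" using sep[OF D, of u' u] that by blast
  qed
  show "s = t" unfolding sa ta using same by (auto intro!: eqel)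
qed

definition ss :: "'v::ab_group_add set \<Rightarrow> 'v set \<Rightarrow> 'v set" where
  "ss U W = {u + w | u w. u \<in> U \<and> w \<in> W}"

definition grp :: "'v::ab_group_add set \<Rightarrow> bool" where
  "grp U \<longleftrightarrow> 0 \<in> U \<and> (\<forall>x\<in>U. \<forall>y\<in>U. x + y \<in> U) \<and> (\<forall>x\<in>U. - x \<in> U)"

lemma ssI: "u \<in> U \<Longrightarrow> w \<in> W \<Longrightarrow> x = u + w \<Longrightarrow> x \<in> ss U W"
  unfolding ss_def by blast

lemma ssE: "x \<in> ss U W \<Longrightarrow> (\<And>u w. u \<in> U \<Longrightarrow> w \<in> W \<Longrightarrow> x = u + w \<Longrightarrow> P) \<Longrightarrow> P"
  unfolding ss_def by blast

lemma grp_ss: assumes U: "grp U" and W: "grp W" shows "grp (ss U W)"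
  unfolding grp_def
proof (intro conjI ballI)
  show "0 \<in> ss U W" using U W unfolding grp_def by (intro ssI[of 0 _ 0]) auto
next
  fix x y assume "x \<in> ss U W" "y \<in> ss U W"
  then obtain u1 w1 u2 w2 where "u1 \<in> U" "w1 \<in> W" "x = u1 + w1" "u2 \<in> U" "w2 \<in> W" "y = u2 + w2"
    by (metis ssE)
  then show "x + y \<in> ss U W" using U W unfolding grp_def
    by (intro ssI[of "u1 + u2" _ "w1 + w2"]) (auto simp: algebra_simps)
next
  fix x assume "x \<in> ss U W"
  then obtain u w where "u \<in> U" "w \<in> W" "x = u + w" by (metis ssE)
  then show "- x \<in> ss U W" using U W unfolding grp_def
    by (intro ssI[of "- u" _ "- w"]) (auto simp: algebra_simps)
qed

lemma grp_int: "grp U \<Longrightarrow> grp W \<Longrightarrow> grp (U \<inter> W)"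
  unfolding grp_def by auto

lemma ss_comm: "ss (U::'a::ab_group_add set) W = ss W U"
proof -
  have "ss U W \<subseteq> ss W U" for U W :: "'a set"
  proof
    fix x assume "x \<in> ss U W"
    then obtain u w where "u \<in> U" "w \<in> W" "x = u + w" by (metis ssE)
    then show "x \<in> ss W U" by (intro ssI[of w _ u]) (auto simp: add.commute)
  qed
  then show ?thesis by (metis subset_antisym)
qed

lemma desargues:
  assumes g: "grp A0" "grp A1" "grp A2" "grp B0" "grp B1" "grp B2"
  defines "C0 \<equiv> ss A1 A2 \<inter> ss B1 B2" and "C1 \<equiv> ss A0 A2 \<inter> ss B0 B2" and "C2 \<equiv> ss A0 A1 \<inter> ss B0 B1"
  defines "C \<equiv> C2 \<inter> ss C0 C1"
  shows "ss A0 B0 \<inter> ss A1 B1 \<inter> ss A2 B2 \<subseteq> ss A0 (B0 \<inter> ss C B1)"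
proof
  fix x assume x: "x \<in> ss A0 B0 \<inter> ss A1 B1 \<inter> ss A2 B2"
  obtain a0 b0 where m0: "a0 \<in> A0" "b0 \<in> B0" "x = a0 + b0" using x by (metis IntD1 ssE)
  obtain a1 b1 where m1: "a1 \<in> A1" "b1 \<in> B1" "x = a1 + b1" using x by (metis IntD1 IntD2 ssE)
  obtain a2 b2 where m2: "a2 \<in> A2" "b2 \<in> B2" "x = a2 + b2" using x by (metis IntD2 ssE)
  have neg: "\<And>U u. grp U \<Longrightarrow> u \<in> U \<Longrightarrow> - u \<in> U" unfolding grp_def by blast
  have k2: "a0 - a1 \<in> C2" unfolding C2_def
  proof
    show "a0 - a1 \<in> ss A0 A1" using m0 neg[OF g(2) m1(1)] by (intro ssI[of a0 _ "- a1"]) auto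
    show "a0 - a1 \<in> ss B0 B1" using m1 neg[OF g(4) m0(2)] m0(3) m1(3)
      by (intro ssI[of "- b0" _ b1]) (auto simp: algebra_simps)
  qed
  have k0: "- (a1 - a2) \<in> C0" unfolding C0_def
  proof
    show "- (a1 - a2) \<in> ss A1 A2" using m2 neg[OF g(2) m1(1)] by (intro ssI[of "- a1" _ a2]) auto
    show "- (a1 - a2) \<in> ss B1 B2" using m1 neg[OF g(6) m2(2)] m1(3) m2(3)
      by (intro ssI[of b1 _ "- b2"]) (auto simp: algebra_simps)
  qed
  have k1: "a0 - a2 \<in> C1" unfolding C1_def
  proof
    show "a0 - a2 \<in> ss A0 A2" using m0 neg[OF g(3) m2(1)] by (intro ssI[of a0 _ "- a2"]) auto
    show "a0 - a2 \<in> ss B0 B2" using m2 neg[OF g(4) m0(2)] m0(3) m2(3)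
      by (intro ssI[of "- b0" _ b2]) (auto simp: algebra_simps)
  qed
  have "a0 - a1 \<in> ss C0 C1" using k0 k1 by (intro ssI[of "- (a1 - a2)" _ "a0 - a2"]) auto
  then have kC: "a0 - a1 \<in> C" using k2 unfolding C_def by simp
  have gC: "grp C" unfolding C_def C0_def C1_def C2_def using g by (simp add: grp_ss grp_int)
  have "b0 \<in> ss C B1" using neg[OF gC kC] m1 m0(3) m1(3)
    by (intro ssI[of "- (a0 - a1)" _ b1]) (auto simp: algebra_simps)
  then have "b0 \<in> B0 \<inter> ss C B1" using m0 by simp
  then show "x \<in> ss A0 (B0 \<inter> ss C B1)" using m0 by (intro ssI[of a0 _ b0]) auto
qed

lemma pmeet_glb: "is_lattice_on S le3 \<Longrightarrow> x \<in> S \<Longrightarrow> y \<in> S \<Longrightarrow> is_glb_in S le3 x y (pmeet S le3 x y)"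
  unfolding is_lattice_on_def using pmeet_eq by metis

context
  fixes S :: "('a::lattice \<times> 'a \<times> 'a) set"
  assumes lat: "is_lattice_on S le3"
begin

lemma J_in: "x \<in> S \<Longrightarrow> y \<in> S \<Longrightarrow> pjoin S le3 x y \<in> S"
  using pjoin_lub[OF lat] unfolding is_lub_in_def by blast
lemma M_in: "x \<in> S \<Longrightarrow> y \<in> S \<Longrightarrow> pmeet S le3 x y \<in> S"
  using pmeet_glb[OF lat] unfolding is_glb_in_def by blast
lemma J_ub1: "x \<in> S \<Longrightarrow> y \<in> S \<Longrightarrow> le3 x (pjoin S le3 x y)"
  using pjoin_lub[OF lat] unfolding is_lub_in_def by blast
lemma J_ub2: "x \<in> S \<Longrightarrow> y \<in> S \<Longrightarrow> le3 y (pjoin S le3 x y)"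
  using pjoin_lub[OF lat] unfolding is_lub_in_def by blast
lemma M_lb1: "x \<in> S \<Longrightarrow> y \<in> S \<Longrightarrow> le3 (pmeet S le3 x y) x"
  using pmeet_glb[OF lat] unfolding is_glb_in_def by blast
lemma J_le: "x \<in> S \<Longrightarrow> y \<in> S \<Longrightarrow> le3 x y \<Longrightarrow> pjoin S le3 x y = y"
  by (rule pjoin_eq) (auto simp: is_lub_in_def le3_refl)
lemma M_le1: "x \<in> S \<Longrightarrow> y \<in> S \<Longrightarrow> le3 x y \<Longrightarrow> pmeet S le3 x y = x"
  by (rule pmeet_eq) (auto simp: is_glb_in_def le3_refl)
lemma M_le2: "x \<in> S \<Longrightarrow> y \<in> S \<Longrightarrow> le3 y x \<Longrightarrow> pmeet S le3 x y = y"
  by (rule pmeet_eq) (auto simp: is_glb_in_def le3_refl)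

lemma arg_wmod:
  assumes arg: "arguesian_lattice_on S le3"
    and x: "x \<in> S" and y: "y \<in> S" and z: "z \<in> S" and xz: "le3 x z"
  shows "le3 (pmeet S le3 (pjoin S le3 x y) z) (pjoin S le3 x (pmeet S le3 y z))"
proof -
  let ?J = "pjoin S le3" and ?M = "pmeet S le3"
  define w where "w = ?J (?J x y) z"
  have xy: "?J x y \<in> S" using J_in x y by blast
  have w: "w \<in> S" unfolding w_def using J_in xy z by blast
  have zw: "le3 z w" unfolding w_def using J_ub2 xy z by blast
  have xyw: "le3 (?J x y) w" unfolding w_def using J_ub1 xy z by blast
  have xw: "le3 x w" using xyw J_ub1[OF x y] le3_trans by blast
  have yw: "le3 y w" using xyw J_ub2[OF x y] le3_trans by blast
  have ww: "?J w w = w" "?M w w = w" using J_le[OF w w le3_refl] M_le1[OF w w le3_refl] by auto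
  have zz: "?J z z = z" using J_le[OF z z le3_refl] by auto
  have c2: "?M (?J x z) (?J y z) = z"
    using J_le[OF x z xz] M_le1[OF z J_in[OF y z] J_ub2[OF y z]] by simp
  have c0: "?M (?J z w) (?J z w) = w" using J_le[OF z w zw] ww by simp
  have c1: "?M (?J x w) (?J y w) = w" using J_le[OF x w xw] J_le[OF y w yw] ww by simp
  have c: "?M z (?J w w) = z" using ww M_le1[OF z w zw] by simp
  have L: "?M (?M (?J x y) (?J z z)) (?J w w) = ?M (?J x y) z"
  proof -
    have m: "?M (?J x y) z \<in> S" using M_in xy z by blast
    have "le3 (?M (?J x y) z) w" using M_lb1[OF xy z] xyw le3_trans by blast
    then show ?thesis using zz ww M_le1[OF m w] by simp
  qed
  have "le3 (?M (?M (?J x y) (?J z z)) (?J w w))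
          (?J x (?M y (?J (?M (?M (?J x z) (?J y z)) (?J (?M (?J z w) (?J z w)) (?M (?J x w) (?J y w)))) z)))"
    using arg x y z w unfolding arguesian_lattice_on_def Let_def by blast
  then show ?thesis using L c0 c1 c2 c ww zz by simp
qed

end

lemma span_sub:
  assumes "module.subspace fscale U" "module.subspace fscale W"
  shows "module.span (fscale :: 'f::field \<Rightarrow> ('i \<Rightarrow> 'f) \<Rightarrow> _) (U \<union> W) = ss U W"
proof -
  have "module.span (fscale :: 'f::field \<Rightarrow> ('i \<Rightarrow> 'f) \<Rightarrow> _) U = U" "module.span (fscale :: 'f::field \<Rightarrow> ('i \<Rightarrow> 'f) \<Rightarrow> _) W = W"
    using module.span_eq_iff[OF module_fscale] assms by blast+
  then show ?thesis using module.span_Un[OF module_fscale, of U W] unfolding ss_def by simp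
qed

lemma grp_sub:
  assumes "module.subspace (fscale :: 'f::field \<Rightarrow> ('i \<Rightarrow> 'f) \<Rightarrow> _) U"
  shows "grp U"
proof -
  have S: "0 \<in> U" "\<And>x y. x \<in> U \<Longrightarrow> y \<in> U \<Longrightarrow> x + y \<in> U" "\<And>c x. x \<in> U \<Longrightarrow> fscale c x \<in> U"
    using assms unfolding module.subspace_def[OF module_fscale] by auto
  have "\<And>x. x \<in> U \<Longrightarrow> - x \<in> U"
  proof -
    fix x assume "x \<in> U"
    then have "fscale (-1) x \<in> U" by (rule S(3))
    moreover have "fscale (-1) x = - x" by (simp add: fscale_def fun_eq_iff)
    ultimately show "- x \<in> U" by simp
  qed
  then show ?thesis unfolding grp_def using S by blast
qed

context
  fixes D :: "'a::lattice itself"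
  assumes D: "\<And>x y z::'a. x \<sqinter> (y \<squnion> z) = (x \<sqinter> y) \<squnion> (x \<sqinter> z)"
begin

lemma lat3: "is_lattice_on (M3::('a\<times>'a\<times>'a) set) le3" by (rule lattice_M3[OF D])

lemma embM: "x \<in> M3 \<Longrightarrow> y \<in> M3 \<Longrightarrow>
  (emb (pmeet M3 le3 x y) :: ('a set \<times> bool \<Rightarrow> 'f::field) set) = emb x \<inter> emb y"
  for x y :: "'a \<times> 'a \<times> 'a"
  by (cases x; cases y) (simp add: pmeet_M3 emb_meet del: M3_simp)

lemma embJ: "x \<in> M3 \<Longrightarrow> y \<in> M3 \<Longrightarrow>
  (emb (pjoin M3 le3 x y) :: ('a set \<times> bool \<Rightarrow> 'f::field) set) = ss (emb x) (emb y)"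
  for x y :: "'a \<times> 'a \<times> 'a"
  by (cases x; cases y) (simp add: pjoin_M3[OF D] emb_join ss_def del: M3_simp)

lemma emb_embedding: "subspace_lattice_embedding fscale M3 le3 (emb :: _ \<Rightarrow> ('a set \<times> bool \<Rightarrow> 'f::field) set)"
  unfolding subspace_lattice_embedding_def
proof (intro conjI ballI)
  show "inj_on (emb :: _ \<Rightarrow> ('a set \<times> bool \<Rightarrow> 'f::field) set) M3" by (rule emb_inj[OF D])
  fix x y :: "'a \<times> 'a \<times> 'a" assume x: "x \<in> M3" and y: "y \<in> M3"
  show "module.subspace fscale (emb x :: ('a set \<times> bool \<Rightarrow> 'f::field) set)" by (rule emb_subspace)
  show "(emb (pmeet M3 le3 x y) :: ('a set \<times> bool \<Rightarrow> 'f::field) set) = emb x \<inter> emb y" by (rule embM[OF x y])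
  show "(emb (pjoin M3 le3 x y) :: ('a set \<times> bool \<Rightarrow> 'f::field) set) = module.span fscale (emb x \<union> emb y)"
  proof -
    have "module.span fscale (emb x \<union> emb y) = ss (emb x) (emb y :: ('a set \<times> bool \<Rightarrow> 'f) set)"
      by (rule span_sub[OF emb_subspace emb_subspace])
    then show ?thesis using embJ[OF x y, where 'f='f] by simp
  qed
qed

lemma emb_le: "x \<in> M3 \<Longrightarrow> y \<in> M3 \<Longrightarrow> le3 x y \<longleftrightarrow> (emb x :: ('a set \<times> bool \<Rightarrow> real) set) \<subseteq> emb y"
  for x y :: "'a \<times> 'a \<times> 'a"
proof
  assume xy: "x \<in> M3" "y \<in> M3" "le3 x y"
  then have "pmeet M3 le3 x y = x" using M_le1[OF lat3] by blast
  then show "(emb x :: ('a set \<times> bool \<Rightarrow> real) set) \<subseteq> emb y" using embM[OF xy(1,2), where 'f=real] by auto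
next
  assume xy: "x \<in> M3" "y \<in> M3" and sub: "(emb x :: ('a set \<times> bool \<Rightarrow> real) set) \<subseteq> emb y"
  have m: "pmeet M3 le3 x y \<in> M3" using M_in[OF lat3] xy by blast
  have "(emb (pmeet M3 le3 x y) :: ('a set \<times> bool \<Rightarrow> real) set) = emb x"
    using embM[OF xy, where 'f=real] sub by auto
  then have "pmeet M3 le3 x y = x" using emb_inj[OF D, where 'f=real] m xy(1)
    unfolding inj_on_def by blast
  moreover have "le3 (pmeet M3 le3 x y) y" using pmeet_glb[OF lat3 xy] unfolding is_glb_in_def by blast
  ultimately show "le3 x y" by simp
qed

lemma grpE: "x \<in> M3 \<Longrightarrow> grp (emb x :: ('a set \<times> bool \<Rightarrow> real) set)"
  by (rule grp_sub[OF emb_subspace])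

lemma modular3: "modular_lattice_on (M3::('a\<times>'a\<times>'a) set) le3"
  unfolding modular_lattice_on_def
proof (intro conjI lat3 ballI impI)
  fix x y z :: "'a\<times>'a\<times>'a" assume x: "x \<in> M3" and y: "y \<in> M3" and z: "z \<in> M3" and xz: "le3 x z"
  let ?E = "emb :: _ \<Rightarrow> ('a set \<times> bool \<Rightarrow> real) set"
  let ?J = "pjoin M3 le3" and ?M = "pmeet M3 le3"
  have inM: "?J x (?M y z) \<in> M3" "?M (?J x y) z \<in> M3"
    using J_in[OF lat3] M_in[OF lat3] x y z by blast+
  have e1: "?E (?J x (?M y z)) = ss (?E x) (?E y \<inter> ?E z)"
    using embJ[OF x M_in[OF lat3 y z], where 'f=real] embM[OF y z, where 'f=real] by simp
  have e2: "?E (?M (?J x y) z) = ss (?E x) (?E y) \<inter> ?E z"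
    using embM[OF J_in[OF lat3 x y] z, where 'f=real] embJ[OF x y, where 'f=real] by simp
  have sub: "?E x \<subseteq> ?E z" using emb_le[OF x z] xz by simp
  have gx: "grp (?E x)" and gy: "grp (?E y)" and gz: "grp (?E z)" using grpE x y z by auto
  have "ss (?E x) (?E y \<inter> ?E z) = ss (?E x) (?E y) \<inter> ?E z"
  proof (intro set_eqI iffI)
    fix v assume "v \<in> ss (?E x) (?E y \<inter> ?E z)"
    then obtain u w where uw: "u \<in> ?E x" "w \<in> ?E y \<inter> ?E z" "v = u + w" by (metis ssE)
    have "v \<in> ?E z" using uw sub gz unfolding grp_def by blast
    moreover have "v \<in> ss (?E x) (?E y)" using uw by (intro ssI[of u _ w]) auto
    ultimately show "v \<in> ss (?E x) (?E y) \<inter> ?E z" by simp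
  next
    fix v assume v: "v \<in> ss (?E x) (?E y) \<inter> ?E z"
    then obtain u w where uw: "u \<in> ?E x" "w \<in> ?E y" "v = u + w" by (metis IntD1 ssE)
    have "- u \<in> ?E z" using uw sub gz unfolding grp_def by blast
    then have "- u + v \<in> ?E z" using v gz unfolding grp_def by blast
    moreover have "- u + v = w" using uw by simp
    ultimately show "v \<in> ss (?E x) (?E y \<inter> ?E z)" using uw by (intro ssI[of u _ w]) auto
  qed
  then have "?E (?J x (?M y z)) = ?E (?M (?J x y) z)" using e1 e2 by simp
  then show "?J x (?M y z) = ?M (?J x y) z" using emb_inj[OF D, where 'f=real] inM unfolding inj_on_def by blast
qed

lemma arguesian3: "arguesian_lattice_on (M3::('a\<times>'a\<times>'a) set) le3"
  unfolding arguesian_lattice_on_def Let_def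
proof (intro conjI lat3 ballI)
  fix a0 a1 a2 b0 b1 b2 :: "'a\<times>'a\<times>'a"
  assume m: "a0 \<in> M3" "a1 \<in> M3" "a2 \<in> M3" "b0 \<in> M3" "b1 \<in> M3" "b2 \<in> M3"
  let ?E = "emb :: _ \<Rightarrow> ('a set \<times> bool \<Rightarrow> real) set"
  let ?J = "pjoin M3 le3" and ?M = "pmeet M3 le3"
  have Jin: "\<And>x y :: 'a\<times>'a\<times>'a. x \<in> M3 \<Longrightarrow> y \<in> M3 \<Longrightarrow> ?J x y \<in> M3" using J_in[OF lat3] by blast
  have Min: "\<And>x y :: 'a\<times>'a\<times>'a. x \<in> M3 \<Longrightarrow> y \<in> M3 \<Longrightarrow> ?M x y \<in> M3" using M_in[OF lat3] by blast
  have EJ: "\<And>x y :: 'a\<times>'a\<times>'a. x \<in> M3 \<Longrightarrow> y \<in> M3 \<Longrightarrow> ?E (?J x y) = ss (?E x) (?E y)" by (rule embJ)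
  have EM: "\<And>x y :: 'a\<times>'a\<times>'a. x \<in> M3 \<Longrightarrow> y \<in> M3 \<Longrightarrow> ?E (?M x y) = ?E x \<inter> ?E y" by (rule embM)
  define c where "c = ?M (?M (?J a0 a1) (?J b0 b1)) (?J (?M (?J a1 a2) (?J b1 b2)) (?M (?J a0 a2) (?J b0 b2)))"
  have cM: "c \<in> M3" unfolding c_def using m by (simp only: Jin Min)
  have Ec: "?E c = (ss (?E a0) (?E a1) \<inter> ss (?E b0) (?E b1)) \<inter>
      ss (ss (?E a1) (?E a2) \<inter> ss (?E b1) (?E b2)) (ss (?E a0) (?E a2) \<inter> ss (?E b0) (?E b2))"
    unfolding c_def using m by (simp only: Jin Min EJ EM)
  have L: "?M (?M (?J a0 b0) (?J a1 b1)) (?J a2 b2) \<in> M3" using m by (simp only: Jin Min)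
  have R: "?J a0 (?M b0 (?J c b1)) \<in> M3" using m cM by (simp only: Jin Min)
  have EL: "?E (?M (?M (?J a0 b0) (?J a1 b1)) (?J a2 b2)) = ss (?E a0) (?E b0) \<inter> ss (?E a1) (?E b1) \<inter> ss (?E a2) (?E b2)"
    using m by (simp only: Jin Min EJ EM)
  have ER: "?E (?J a0 (?M b0 (?J c b1))) = ss (?E a0) (?E b0 \<inter> ss (?E c) (?E b1))"
    using m cM by (simp only: Jin Min EJ EM)
  have "?E (?M (?M (?J a0 b0) (?J a1 b1)) (?J a2 b2)) \<subseteq> ?E (?J a0 (?M b0 (?J c b1)))"
    unfolding EL ER Ec by (rule desargues) (use grpE m in auto)
  then show "le3 (?M (?M (?J a0 b0) (?J a1 b1)) (?J a2 b2)) (?J a0 (?M b0 (?J c b1)))"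
    using emb_le[OF L R] by simp
qed

end

theorem proposition6p5:
  shows "(distributive_lattice TYPE('a::lattice) \<longleftrightarrow> modular_lattice_on (M3 :: ('a \<times> 'a \<times> 'a) set) le3)
       \<and> (distributive_lattice TYPE('a) \<longleftrightarrow> arguesian_lattice_on (M3 :: ('a \<times> 'a \<times> 'a) set) le3)
       \<and> (distributive_lattice TYPE('a) \<longrightarrow>
            (\<exists>\<phi> :: 'a \<times> 'a \<times> 'a \<Rightarrow> ('a set \<times> bool \<Rightarrow> 'f::field) set.
               subspace_lattice_embedding fscale M3 le3 \<phi>))"
proof (intro conjI iffI impI)
  assume "distributive_lattice TYPE('a)"
  note D = distD[OF this]
  show "modular_lattice_on (M3 :: ('a \<times> 'a \<times> 'a) set) le3" by (rule modular3[OF D])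
next
  assume "distributive_lattice TYPE('a)"
  note D = distD[OF this]
  show "arguesian_lattice_on (M3 :: ('a \<times> 'a \<times> 'a) set) le3" by (rule arguesian3[OF D])
next
  assume "distributive_lattice TYPE('a)"
  note D = distD[OF this]
  show "\<exists>\<phi> :: 'a \<times> 'a \<times> 'a \<Rightarrow> ('a set \<times> bool \<Rightarrow> 'f::field) set. subspace_lattice_embedding fscale M3 le3 \<phi>"
    using emb_embedding[OF D] by blast
next
  assume mod: "modular_lattice_on (M3 :: ('a \<times> 'a \<times> 'a) set) le3"
  then have lat: "is_lattice_on (M3 :: ('a \<times> 'a \<times> 'a) set) le3" unfolding modular_lattice_on_def by blast
  show "distributive_lattice TYPE('a)"
  proof (rule wmod_dist[OF lat])
    fix X Y Z :: "'a \<times> 'a \<times> 'a" assume "X \<in> M3" "Y \<in> M3" "Z \<in> M3" "le3 X Z"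
    then have "pjoin M3 le3 X (pmeet M3 le3 Y Z) = pmeet M3 le3 (pjoin M3 le3 X Y) Z"
      using mod unfolding modular_lattice_on_def by blast
    then show "le3 (pmeet M3 le3 (pjoin M3 le3 X Y) Z) (pjoin M3 le3 X (pmeet M3 le3 Y Z))"
      by (simp add: le3_refl)
  qed
next
  assume arg: "arguesian_lattice_on (M3 :: ('a \<times> 'a \<times> 'a) set) le3"
  then have lat: "is_lattice_on (M3 :: ('a \<times> 'a \<times> 'a) set) le3" unfolding arguesian_lattice_on_def by blast
  show "distributive_lattice TYPE('a)"
    by (rule wmod_dist[OF lat]) (rule arg_wmod[OF lat arg])
qed

end
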